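(* Let $c,d\in\mathbb{N}$, $I=\mathbb{N}^d\times[c]$, $I_n=[n]^d\times[c]$. Let $\mathfrak{M}=(M_n)_{n\ge1}$ be a $\mathrm{Sym}$-invariant chain of monoids with $M_n\subseteq\mathbb{Z}_{\ge0}^{(I_n)}$ for all $n$, and let $M=\bigcup_{n\ge1}M_n$. Then the following are equivalent: (i) $\mathfrak{M}$ stabilizes (i.e. there is $p\in\mathbb{N}$ with $M_n=\mathbb{Z}_{\ge0}\mathrm{Sym}(n)(M_m)$ for all $n\ge m\ge p$) and $M_n$ is finitely generated for all sufficiently large $n$; (ii) there exist $p\in\mathbb{N}$ and a finite equivariant Hilbert basis $\mathcal{H}_p$ of $M_p$ that is also an equivariant Hilbert basis of $M_n$ for all $n\ge p$; (iii) there exist $q,q'\in\mathbb{N}$ such that for all $n\ge q$: (a) $M_n=M\cap\mathbb{Z}^{(I_n)}$, and (b) $M_n$ has a finite Hilbert basis consisting of elements of support size at most $q'$; (iv) $M$ has a finite equivariant Hilbert basis.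
   Context: $\mathbb{N}=\{1,2,\dots\}$. $\mathbb{Z}^{(I)}$ is the free abelian group with basis $I$, $\mathbb{Z}_{\ge0}^{(I)}$ its nonnegative vectors; $\mathbb{Z}^{(I_n)}\subseteq\mathbb{Z}^{(I)}$ by extension by zero. Support size = number of nonzero entries. For a set $A$, $\mathbb{Z}_{\ge0}A$ is the set of finite $\mathbb{Z}_{\ge0}$-linear combinations of elements of $A$. A Hilbert basis of a monoid $M$ is a minimal generating set (with respect to $\mathbb{Z}_{\ge0}$-combinations). $\mathrm{Sym}(n)$ is the symmetric group on $[n]$, embedded in $\mathrm{Sym}(n+1)$ as stabilizer of $n+1$; $\mathrm{Sym}=\bigcup_n\mathrm{Sym}(n)$ acts on $\mathbb{Z}^{(I)}$ by linear extension of $\sigma(\mathbf{e}_{(i_1,\dots,i_d),j})=\mathbf{e}_{(\sigma(i_1),\dots,\sigma(i_d)),j}$, restricting to $\mathrm{Sym}(n)$ on $\mathbb{Z}^{(I_n)}$; $G(A)=\{\sigma(\mathbf{u})\mid\sigma\in G,\mathbf{u}\in A\}$. A $\mathrm{Sym}$-invariant chain of monoids is $(M_n)_{n\ge1}$ with $M_n\subseteq\mathbb{Z}^{(I_n)}$ a monoid, $M_m\subseteq M_n$ for $m\le n$, each $M_n$ $\mathrm{Sym}(n)$-invariant. $\mathcal{H}\subseteq M_n$ (resp. $\subseteq M$) is an equivariant Hilbert basis if $\mathrm{Sym}(n)(\mathcal{H})$ (resp. $\mathrm{Sym}(\mathcal{H})$) is a Hilbert basis. *)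

theory Defs
  imports "HOL-Combinatorics.Permutations"
begin

text \<open>Indices (i_1,...,i_d, j) are represented as pairs (list of length d, j).
  Vectors of Z^(I) are functions idx => int with finite support inside I.\<close>

type_synonym idx = "nat list \<times> nat"
type_synonym vec = "idx \<Rightarrow> int"

definition supp :: "vec \<Rightarrow> idx set" where
  "supp u = {x. u x \<noteq> 0}"

definition Iset :: "nat \<Rightarrow> nat \<Rightarrow> idx set" where
  "Iset d c = {(is, j). length is = d \<and> set is \<subseteq> {1..} \<and> j \<in> {1..c}}"

definition In :: "nat \<Rightarrow> nat \<Rightarrow> nat \<Rightarrow> idx set" where
  "In d c n = {(is, j). length is = d \<and> set is \<subseteq> {1..n} \<and> j \<in> {1..c}}"

definition ZIn :: "nat \<Rightarrow> nat \<Rightarrow> nat \<Rightarrow> vec set" where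
  "ZIn d c n = {u. supp u \<subseteq> In d c n}"

definition ZIn_nonneg :: "nat \<Rightarrow> nat \<Rightarrow> nat \<Rightarrow> vec set" where
  "ZIn_nonneg d c n = {u. u \<in> ZIn d c n \<and> (\<forall>x. u x \<ge> 0)}"

definition is_monoid :: "vec set \<Rightarrow> bool" where
  "is_monoid M \<longleftrightarrow> (\<lambda>_. 0) \<in> M \<and> (\<forall>u\<in>M. \<forall>v\<in>M. (\<lambda>x. u x + v x) \<in> M)"

definition nncomb :: "vec set \<Rightarrow> vec set" where
  "nncomb A = {(\<lambda>x. \<Sum>a\<in>F. int (k a) * a x) | F k. finite F \<and> F \<subseteq> A}"

definition hilbert_basis :: "vec set \<Rightarrow> vec set \<Rightarrow> bool" where
  "hilbert_basis H M \<longleftrightarrow> H \<subseteq> M \<and> nncomb H = M \<and> (\<forall>H'. H' \<subset> H \<longrightarrow> nncomb H' \<noteq> M)"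

definition finitely_generated :: "vec set \<Rightarrow> bool" where
  "finitely_generated M \<longleftrightarrow> (\<exists>F. finite F \<and> F \<subseteq> M \<and> nncomb F = M)"

definition SymN :: "nat \<Rightarrow> (nat \<Rightarrow> nat) set" where
  "SymN n = {\<sigma>. \<sigma> permutes {1..n}}"

definition SymAll :: "(nat \<Rightarrow> nat) set" where
  "SymAll = (\<Union>n\<in>{1..}. SymN n)"

text \<open>Action: sigma(e_{(i_1..i_d),j}) = e_{(sigma i_1..sigma i_d),j}, extended linearly;
  i.e. (sigma u)(i,j) = u(sigma^{-1} i, j).\<close>
definition act :: "(nat \<Rightarrow> nat) \<Rightarrow> vec \<Rightarrow> vec" where
  "act \<sigma> u = (\<lambda>(is, j). u (map (inv \<sigma>) is, j))"

definition orbit_set :: "(nat \<Rightarrow> nat) set \<Rightarrow> vec set \<Rightarrow> vec set" where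
  "orbit_set G A = {act \<sigma> u | \<sigma> u. \<sigma> \<in> G \<and> u \<in> A}"

definition equiv_hilbert_basis_n :: "nat \<Rightarrow> vec set \<Rightarrow> vec set \<Rightarrow> bool" where
  "equiv_hilbert_basis_n n H M \<longleftrightarrow> H \<subseteq> M \<and> hilbert_basis (orbit_set (SymN n) H) M"

definition equiv_hilbert_basis :: "vec set \<Rightarrow> vec set \<Rightarrow> bool" where
  "equiv_hilbert_basis H M \<longleftrightarrow> H \<subseteq> M \<and> hilbert_basis (orbit_set SymAll H) M"

text \<open>Sym-invariant chain of monoids (M_n)_{n>=1}; values at n = 0 are irrelevant.\<close>
definition sym_inv_chain :: "nat \<Rightarrow> nat \<Rightarrow> (nat \<Rightarrow> vec set) \<Rightarrow> bool" where
  "sym_inv_chain d c M \<longleftrightarrow>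
     (\<forall>n\<ge>1. is_monoid (M n) \<and> M n \<subseteq> ZIn d c n) \<and>
     (\<forall>m n. 1 \<le> m \<and> m \<le> n \<longrightarrow> M m \<subseteq> M n) \<and>
     (\<forall>n\<ge>1. \<forall>\<sigma>\<in>SymN n. \<forall>u\<in>M n. act \<sigma> u \<in> M n)"

definition chain_union :: "(nat \<Rightarrow> vec set) \<Rightarrow> vec set" where
  "chain_union M = (\<Union>n\<in>{1..}. M n)"

end

theory Submission
  imports Defs
begin


definition irr :: "vec set \<Rightarrow> vec set" where
  "irr M = {u \<in> M. u \<noteq> (\<lambda>_. 0) \<and> (\<forall>v\<in>M. \<forall>w\<in>M. u = (\<lambda>x. v x + w x) \<longrightarrow> v = (\<lambda>_. 0) \<or> w = (\<lambda>_. 0))}"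

definition good :: "vec set \<Rightarrow> bool" where
  "good M \<longleftrightarrow> is_monoid M \<and> (\<forall>u\<in>M. finite (supp u) \<and> (\<forall>x. u x \<ge> 0))"

lemma nncombI:
  assumes "finite F" "F \<subseteq> A" shows "(\<lambda>x. \<Sum>a\<in>F. int (k a) * a x) \<in> nncomb A"
  unfolding nncomb_def
  apply (rule CollectI)
  apply (rule exI[of _ F])
  apply (rule exI[of _ k])
  using assms by simp

lemma nncombE:
  assumes "u \<in> nncomb A"
  obtains F k where "u = (\<lambda>x. \<Sum>a\<in>F. int (k a) * a x)" "finite F" "F \<subseteq> A"
  using assms unfolding nncomb_def by blast

lemma monoid_smult:
  assumes "is_monoid N" "u \<in> N" shows "(\<lambda>x. int k * u x) \<in> N"
proof (induction k)
  case 0 then show ?case using assms by (simp add: is_monoid_def)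
next
  case (Suc k)
  have "(\<lambda>x. int (Suc k) * u x) = (\<lambda>x. u x + int k * u x)" by (simp add: algebra_simps)
  then show ?case using Suc assms unfolding is_monoid_def by metis
qed

lemma nncomb_sub:
  assumes "is_monoid N" "A \<subseteq> N" shows "nncomb A \<subseteq> N"
proof
  fix u assume "u \<in> nncomb A"
  then obtain F k where u: "u = (\<lambda>x. \<Sum>a\<in>F. int (k a) * a x)" and F: "finite F" "F \<subseteq> A"
    by (rule nncombE)
  have "F \<subseteq> A \<Longrightarrow> (\<lambda>x. \<Sum>a\<in>F. int (k a) * a x) \<in> N" using F(1)
  proof (induction F rule: finite_induct)
    case empty then show ?case using assms by (simp add: is_monoid_def)
  next
    case (insert a F)
    have "(\<lambda>x. \<Sum>a\<in>insert a F. int (k a) * a x) = (\<lambda>x. int (k a) * a x + (\<Sum>a\<in>F. int (k a) * a x))"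
      using insert by simp
    moreover have "(\<lambda>x. int (k a) * a x) \<in> N" using monoid_smult assms insert by blast
    ultimately show ?case using insert assms unfolding is_monoid_def by auto
  qed
  then show "u \<in> N" using u F by simp
qed

lemma nncomb_zero: "(\<lambda>_. 0) \<in> nncomb A"
  unfolding nncomb_def by (rule CollectI, rule exI[of _ "{}"]) auto

lemma nncomb_add:
  assumes "u \<in> nncomb A" "v \<in> nncomb A" shows "(\<lambda>x. u x + v x) \<in> nncomb A"
proof -
  obtain F1 k1 where u: "u = (\<lambda>x. \<Sum>a\<in>F1. int (k1 a) * a x)" and F1: "finite F1" "F1 \<subseteq> A"
    using assms(1) by (rule nncombE)
  obtain F2 k2 where v: "v = (\<lambda>x. \<Sum>a\<in>F2. int (k2 a) * a x)" and F2: "finite F2" "F2 \<subseteq> A"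
    using assms(2) by (rule nncombE)
  define k where "k a = (if a \<in> F1 then k1 a else 0) + (if a \<in> F2 then k2 a else 0)" for a
  have "(\<lambda>x. u x + v x) = (\<lambda>x. \<Sum>a\<in>F1 \<union> F2. int (k a) * a x)"
  proof
    fix x
    have "(\<Sum>a\<in>F1 \<union> F2. int (k a) * a x) = (\<Sum>a\<in>F1 \<union> F2. (if a \<in> F1 then int (k1 a) * a x else 0))
        + (\<Sum>a\<in>F1 \<union> F2. (if a \<in> F2 then int (k2 a) * a x else 0))"
    proof -
      have "int (k a) * a x = (if a \<in> F1 then int (k1 a) * a x else 0) + (if a \<in> F2 then int (k2 a) * a x else 0)" for a
        by (simp add: k_def distrib_right)
      then show ?thesis by (simp add: sum.distrib)
    qed
    also have "\<dots> = (\<Sum>a\<in>(F1 \<union> F2) \<inter> F1. int (k1 a) * a x) + (\<Sum>a\<in>(F1 \<union> F2) \<inter> F2. int (k2 a) * a x)"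
      using F1 F2 by (simp only: sum.inter_restrict finite_Un)
    also have "\<dots> = u x + v x" using u v by (simp add: Int_absorb1)
    finally show "u x + v x = (\<Sum>a\<in>F1 \<union> F2. int (k a) * a x)" by simp
  qed
  then show ?thesis using nncombI[of "F1 \<union> F2" A k] F1 F2 by simp
qed

lemma nncomb_monoid: "is_monoid (nncomb A)"
  unfolding is_monoid_def using nncomb_zero nncomb_add by blast

lemma nncomb_base: "A \<subseteq> nncomb A"
proof
  fix a assume "a \<in> A"
  have "a = (\<lambda>x. \<Sum>b\<in>{a}. int ((\<lambda>_. 1) b) * b x) \<and> finite {a} \<and> {a} \<subseteq> A" using \<open>a \<in> A\<close> by simp
  then show "a \<in> nncomb A" using nncombI[of "{a}" A "\<lambda>_. 1"] by simp
qed

lemma nncomb_mono: "A \<subseteq> B \<Longrightarrow> nncomb A \<subseteq> nncomb B"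
proof
  fix u assume AB: "A \<subseteq> B" and u: "u \<in> nncomb A"
  from u obtain F k where "u = (\<lambda>x. \<Sum>a\<in>F. int (k a) * a x)" "finite F" "F \<subseteq> A" by (rule nncombE)
  then show "u \<in> nncomb B" using nncombI[of F B k] AB by simp
qed

lemma nncomb_idem: "nncomb (nncomb A) = nncomb A"
  using nncomb_sub[OF nncomb_monoid order_refl] nncomb_base by blast




lemma good_sum_supp:
  assumes "finite (supp v)" "\<forall>x. v x \<ge> 0" "finite S" "supp v \<subseteq> S"
  shows "(\<Sum>x\<in>S. v x) = (\<Sum>x\<in>supp v. v x)"
  using assms by (intro sum.mono_neutral_right) (auto simp: supp_def)

lemma good_sum_pos:
  assumes "finite (supp v)" "\<forall>x. v x \<ge> 0" "v \<noteq> (\<lambda>_. 0)"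
  shows "(\<Sum>x\<in>supp v. v x) > 0"
proof -
  obtain y where "v y \<noteq> 0" using assms(3) by (metis ext)
  moreover have "v y \<ge> 0" using assms(2) by blast
  ultimately have "y \<in> supp v" "v y > 0" by (auto simp: supp_def)
  then show ?thesis using assms(1,2) by (intro sum_pos2[of _ y]) auto
qed

lemma irr_gen:
  assumes "good M" shows "M \<subseteq> nncomb (irr M)"
proof -
  have mon: "is_monoid M" and G: "\<And>u. u \<in> M \<Longrightarrow> finite (supp u) \<and> (\<forall>x. u x \<ge> 0)"
    using assms by (auto simp: good_def)
  have "\<forall>u. u \<in> M \<longrightarrow> nat (\<Sum>x\<in>supp u. u x) = w \<longrightarrow> u \<in> nncomb (irr M)" for w
  proof (induction w rule: less_induct)
    case (less w)
    show ?case
    proof (intro allI impI)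
      fix u assume u: "u \<in> M" and wu: "nat (\<Sum>x\<in>supp u. u x) = w"
      show "u \<in> nncomb (irr M)"
      proof (cases "u = (\<lambda>_. 0)")
        case True then show ?thesis using nncomb_zero by simp
      next
        case nz: False
        show ?thesis
        proof (cases "u \<in> irr M")
          case True then show ?thesis using nncomb_base by blast
        next
          case False
          then obtain v w' where vw: "v \<in> M" "w' \<in> M" "u = (\<lambda>x. v x + w' x)" "v \<noteq> (\<lambda>_. 0)" "w' \<noteq> (\<lambda>_. 0)"
            using nz u unfolding irr_def by blast
          have Gv: "finite (supp v)" "\<forall>x. v x \<ge> 0" using G vw by auto
          have Gw: "finite (supp w')" "\<forall>x. w' x \<ge> 0" using G vw by auto
          have Gu: "finite (supp u)" "\<forall>x. u x \<ge> 0" using G u by auto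
          have sv: "supp v \<subseteq> supp u" "supp w' \<subseteq> supp u"
            using vw(3) Gv Gw by (auto simp: supp_def add_nonneg_eq_0_iff)
          have eq: "(\<Sum>x\<in>supp u. u x) = (\<Sum>x\<in>supp v. v x) + (\<Sum>x\<in>supp w'. w' x)"
            using good_sum_supp[OF Gv Gu(1) sv(1)] good_sum_supp[OF Gw Gu(1) sv(2)] vw(3)
            by (simp add: sum.distrib)
          have pv: "(\<Sum>x\<in>supp v. v x) > 0" using good_sum_pos Gv vw by blast
          have pw: "(\<Sum>x\<in>supp w'. w' x) > 0" using good_sum_pos Gw vw by blast
          have "v \<in> nncomb (irr M)" using less.IH[of "nat (\<Sum>x\<in>supp v. v x)"] eq pv pw wu vw by auto
          moreover have "w' \<in> nncomb (irr M)" using less.IH[of "nat (\<Sum>x\<in>supp w'. w' x)"] eq pv pw wu vw by auto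
          ultimately show ?thesis using nncomb_add vw by simp
        qed
      qed
    qed
  qed
  then show ?thesis by blast
qed

lemma irr_in_gen:
  assumes "H \<subseteq> M" "nncomb H = M" shows "irr M \<subseteq> H"
proof
  fix u assume ui: "u \<in> irr M"
  then have "u \<in> nncomb H" using assms unfolding irr_def by auto
  then obtain F k where u: "u = (\<lambda>x. \<Sum>a\<in>F. int (k a) * a x)" and F: "finite F" "F \<subseteq> H"
    by (rule nncombE)
  have "\<exists>a\<in>F. k a > 0 \<and> a \<noteq> (\<lambda>_. 0)"
  proof (rule ccontr)
    assume "\<not> ?thesis"
    then have "\<forall>a\<in>F. int (k a) * a x = 0" for x by auto
    then have "u = (\<lambda>_. 0)" unfolding u by (intro ext sum.neutral) auto
    then show False using ui unfolding irr_def by auto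
  qed
  then obtain a where a: "a \<in> F" "k a > 0" "a \<noteq> (\<lambda>_. 0)" by blast
  define k' where "k' = k(a := k a - 1)"
  define v where "v = (\<lambda>x. \<Sum>b\<in>F. int (k' b) * b x)"
  have vM: "v \<in> M" using nncombI[of F H k'] assms F unfolding v_def by simp
  have aM: "a \<in> M" using a F assms by auto
  have "u = (\<lambda>x. a x + v x)"
  proof
    fix x
    have "u x = int (k a) * a x + (\<Sum>b\<in>F - {a}. int (k b) * b x)"
      using u F a by (simp add: sum.remove)
    moreover have "v x = int (k' a) * a x + (\<Sum>b\<in>F - {a}. int (k' b) * b x)"
      unfolding v_def using F a by (simp add: sum.remove)
    moreover have "(\<Sum>b\<in>F - {a}. int (k' b) * b x) = (\<Sum>b\<in>F - {a}. int (k b) * b x)"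
      unfolding k'_def by (rule sum.cong) auto
    moreover have "int (k' a) = int (k a) - 1" using a unfolding k'_def by auto
    ultimately show "u x = a x + v x" by (simp add: algebra_simps)
  qed
  then have "v = (\<lambda>_. 0)" using ui aM vM a unfolding irr_def by blast
  then have "u = a" using \<open>u = (\<lambda>x. a x + v x)\<close> by simp
  then show "u \<in> H" using a F by auto
qed

lemma irr_sub_M: "irr M \<subseteq> M" unfolding irr_def by auto

lemma nncomb_irr:
  assumes "good M" shows "nncomb (irr M) = M"
  using irr_gen[OF assms] nncomb_sub[of M "irr M"] assms irr_sub_M unfolding good_def by blast

lemma hb_iff:
  assumes "good M" shows "hilbert_basis H M \<longleftrightarrow> H = irr M"
proof
  assume hb: "hilbert_basis H M"
  then have H: "H \<subseteq> M" "nncomb H = M" unfolding hilbert_basis_def by auto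
  have "irr M \<subseteq> H" using irr_in_gen H by blast
  moreover have "H \<subseteq> irr M"
  proof (rule ccontr)
    assume "\<not> H \<subseteq> irr M"
    then obtain h where h: "h \<in> H" "h \<notin> irr M" by blast
    have sub: "H - {h} \<subset> H" using h by auto
    have "nncomb (H - {h}) = M"
    proof
      show "nncomb (H - {h}) \<subseteq> M" using nncomb_sub[of M "H - {h}"] assms H unfolding good_def by blast
      show "M \<subseteq> nncomb (H - {h})"
        using nncomb_irr[OF assms] nncomb_mono[of "irr M" "H - {h}"] \<open>irr M \<subseteq> H\<close> h by blast
    qed
    then show False using hb sub unfolding hilbert_basis_def by blast
  qed
  ultimately show "H = irr M" by blast
next
  assume "H = irr M"
  then show "hilbert_basis H M"
    unfolding hilbert_basis_def using nncomb_irr[OF assms] irr_in_gen irr_sub_M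
    by (metis dual_order.trans psubset_imp_subset psubset_subset_trans subset_not_subset_eq)
qed

lemma irr_sub:
  assumes "N \<subseteq> M'" "u \<in> N" "u \<in> irr M'" shows "u \<in> irr N"
  using assms unfolding irr_def by blast




lemma act_apply: "act \<sigma> u (xs, j) = u (map (inv \<sigma>) xs, j)"
  by (simp add: act_def)

lemma act_inv1: "bij \<sigma> \<Longrightarrow> act (inv \<sigma>) (act \<sigma> u) = u"
  by (auto simp: act_def fun_eq_iff inv_inv_eq bij_is_inj comp_def)

lemma act_inv2: "bij \<sigma> \<Longrightarrow> act \<sigma> (act (inv \<sigma>) u) = u"
  by (auto simp: act_def fun_eq_iff inv_inv_eq comp_def bij_is_surj surj_f_inv_f)

lemma act_add: "act \<sigma> (\<lambda>x. u x + v x) = (\<lambda>x. act \<sigma> u x + act \<sigma> v x)"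
  by (auto simp: act_def fun_eq_iff)

lemma act_zero: "act \<sigma> (\<lambda>_. 0) = (\<lambda>_. 0)"
  by (auto simp: act_def fun_eq_iff)

lemma act_eq_zero: "bij \<sigma> \<Longrightarrow> act \<sigma> u = (\<lambda>_. 0) \<longleftrightarrow> u = (\<lambda>_. 0)"
  using act_inv1 act_zero by metis

lemma irr_act:
  assumes "bij \<sigma>" "\<And>u. u \<in> M \<Longrightarrow> act \<sigma> u \<in> M" "\<And>u. u \<in> M \<Longrightarrow> act (inv \<sigma>) u \<in> M"
    and "u \<in> irr M"
  shows "act \<sigma> u \<in> irr M"
proof -
  have uM: "u \<in> M" "u \<noteq> (\<lambda>_. 0)" using assms(4) unfolding irr_def by auto
  have "act \<sigma> u \<noteq> (\<lambda>_. 0)" using act_eq_zero[OF assms(1)] uM by blast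
  moreover have "v = (\<lambda>_. 0) \<or> w = (\<lambda>_. 0)" if vw: "v \<in> M" "w \<in> M" "act \<sigma> u = (\<lambda>x. v x + w x)" for v w
  proof -
    have "u = act (inv \<sigma>) (act \<sigma> u)" using act_inv1[OF assms(1)] by simp
    also have "\<dots> = (\<lambda>x. act (inv \<sigma>) v x + act (inv \<sigma>) w x)" using vw(3) act_add by simp
    finally have "act (inv \<sigma>) v = (\<lambda>_. 0) \<or> act (inv \<sigma>) w = (\<lambda>_. 0)"
      using assms(3) vw assms(4) unfolding irr_def by blast
    then show ?thesis using act_eq_zero[OF bij_imp_bij_inv[OF assms(1)]] by blast
  qed
  ultimately show ?thesis using assms(2) uM unfolding irr_def by blast
qed

lemma supp_act: "bij \<sigma> \<Longrightarrow> supp (act \<sigma> u) = (\<lambda>(xs, j). (map \<sigma> xs, j)) ` supp u"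
proof -
  assume b: "bij \<sigma>"
  have 1: "map (inv \<sigma>) (map \<sigma> xs) = xs" for xs using b by (simp add: comp_def bij_is_inj)
  have 2: "map \<sigma> (map (inv \<sigma>) xs) = xs" for xs using b by (simp add: comp_def bij_is_surj surj_f_inv_f)
  show ?thesis
  proof (rule set_eqI, clarify)
    fix xs j
    show "((xs, j) \<in> supp (act \<sigma> u)) = ((xs, j) \<in> (\<lambda>(xs, j). (map \<sigma> xs, j)) ` supp u)"
    proof
      assume "(xs, j) \<in> supp (act \<sigma> u)"
      then have "(map (inv \<sigma>) xs, j) \<in> supp u" by (simp add: supp_def act_apply)
      then show "(xs, j) \<in> (\<lambda>(xs, j). (map \<sigma> xs, j)) ` supp u" using 2
        by (metis (no_types, lifting) case_prod_conv image_eqI)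
    next
      assume "(xs, j) \<in> (\<lambda>(xs, j). (map \<sigma> xs, j)) ` supp u"
      then obtain xs' where "(xs', j) \<in> supp u" "xs = map \<sigma> xs'" by auto
      then show "(xs, j) \<in> supp (act \<sigma> u)" using 1 by (simp add: supp_def act_apply)
    qed
  qed
qed

lemma card_supp_act: "bij \<sigma> \<Longrightarrow> card (supp (act \<sigma> u)) = card (supp u)"
proof -
  assume b: "bij \<sigma>"
  have "inj_on (\<lambda>(xs, j). (map \<sigma> xs, j)) (supp u)"
    using bij_is_inj[OF b] by (auto simp: inj_on_def)
  then show ?thesis using supp_act[OF b] card_image by metis
qed

definition idxs :: "vec \<Rightarrow> nat set" where
  "idxs u = {e. \<exists>xs j. u (xs, j) \<noteq> 0 \<and> e \<in> set xs}"

lemma act_agree: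
  assumes "bij \<sigma>" "bij \<tau>" "\<forall>e\<in>idxs h. \<tau> e = \<sigma> e"
  shows "act \<tau> h = act \<sigma> h"
proof (rule ext, clarify)
  fix xs j
  have img: "\<tau> ` idxs h = \<sigma> ` idxs h" using assms(3) by (auto simp: image_def)
  show "act \<tau> h (xs, j) = act \<sigma> h (xs, j)"
  proof (cases "set xs \<subseteq> \<sigma> ` idxs h")
    case True
    have "map (inv \<tau>) xs = map (inv \<sigma>) xs"
    proof (rule map_cong[OF refl])
      fix e assume "e \<in> set xs"
      then obtain s where s: "s \<in> idxs h" "e = \<sigma> s" using True by auto
      then have "\<tau> s = e" using assms(3) by auto
      then show "inv \<tau> e = inv \<sigma> e" using s assms(1,2) by (metis bij_is_inj inv_f_f)
    qed
    then show ?thesis by (simp only: act_apply)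
  next
    case False
    then obtain e where e: "e \<in> set xs" "e \<notin> \<sigma> ` idxs h" by auto
    have z: "h (map (inv \<rho>) xs, j) = 0" if "bij \<rho>" "e \<notin> \<rho> ` idxs h" for \<rho>
    proof (rule ccontr)
      assume "h (map (inv \<rho>) xs, j) \<noteq> 0"
      then have "inv \<rho> e \<in> idxs h" using e(1) unfolding idxs_def by auto
      then have "\<rho> (inv \<rho> e) \<in> \<rho> ` idxs h" by blast
      then show False using that by (simp add: bij_is_surj surj_f_inv_f)
    qed
    show ?thesis using z[OF assms(1)] z[OF assms(2)] e img by (simp add: act_apply)
  qed
qed

lemma perm_extend:
  assumes "finite B" "A \<subseteq> B" "inj_on f A" "f ` A \<subseteq> B"
  shows "\<exists>\<tau>. \<tau> permutes B \<and> (\<forall>x\<in>A. \<tau> x = f x)"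
proof -
  have fA: "finite A" using assms finite_subset by blast
  have "card (B - A) = card (B - f ` A)"
    using assms fA by (simp add: card_Diff_subset card_image)
  then obtain g where g: "bij_betw g (B - A) (B - f ` A)"
    using finite_same_card_bij assms by (meson finite_Diff)
  define \<tau> where "\<tau> x = (if x \<in> A then f x else if x \<in> B then g x else x)" for x
  have "bij_betw \<tau> B B"
  proof -
    have "bij_betw \<tau> A (f ` A)" using assms(3) unfolding \<tau>_def bij_betw_def inj_on_def by auto
    moreover have "bij_betw \<tau> (B - A) (B - f ` A)"
      using g by (rule bij_betw_cong[THEN iffD1, rotated]) (auto simp: \<tau>_def)
    ultimately have "bij_betw \<tau> (A \<union> (B - A)) (f ` A \<union> (B - f ` A))"
      by (rule bij_betw_combine) auto
    moreover have "A \<union> (B - A) = B" "f ` A \<union> (B - f ` A) = B" using assms by auto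
    ultimately show ?thesis by simp
  qed
  then have "\<tau> permutes B" by (rule bij_imp_permutes) (use assms in \<open>auto simp: \<tau>_def\<close>)
  then show ?thesis unfolding \<tau>_def by auto
qed




lemma finite_In: "finite (In d c n)"
proof -
  have "In d c n \<subseteq> {xs. set xs \<subseteq> {1..n} \<and> length xs = d} \<times> {1..c}"
    unfolding In_def by auto
  moreover have "finite ({xs. set xs \<subseteq> {1..n} \<and> length xs = d} \<times> {1..c})"
    using finite_lists_length_eq[of "{1..n}" d] by simp
  ultimately show ?thesis using finite_subset by blast
qed

lemma SymN_bij: "\<sigma> \<in> SymN n \<Longrightarrow> bij \<sigma>"
  unfolding SymN_def using permutes_bij by blast

lemma SymN_inv: "\<sigma> \<in> SymN n \<Longrightarrow> inv \<sigma> \<in> SymN n"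
  unfolding SymN_def using permutes_inv by blast

lemma SymN_mono: "m \<le> n \<Longrightarrow> SymN m \<subseteq> SymN n"
  unfolding SymN_def using permutes_subset[of _ "{1..m}" "{1..n}"] by auto

lemma SymAll_iff: "\<sigma> \<in> SymAll \<longleftrightarrow> (\<exists>n\<ge>1. \<sigma> \<in> SymN n)"
  unfolding SymAll_def by auto

lemma SymAll_bij: "\<sigma> \<in> SymAll \<Longrightarrow> bij \<sigma>"
  using SymAll_iff SymN_bij by blast

lemma SymAll_inv: "\<sigma> \<in> SymAll \<Longrightarrow> inv \<sigma> \<in> SymAll"
  using SymAll_iff SymN_inv by blast

lemma SymN_finite: "finite (SymN n)"
  unfolding SymN_def using finite_permutations[of "{1..n}"] by simp

lemma orbit_finite: "finite G \<Longrightarrow> finite A \<Longrightarrow> finite (orbit_set G A)"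
proof -
  assume "finite G" "finite A"
  moreover have "orbit_set G A = (\<lambda>(\<sigma>, u). act \<sigma> u) ` (G \<times> A)"
    unfolding orbit_set_def by auto
  ultimately show ?thesis by simp
qed

lemma ext_perm:
  assumes h: "h \<in> ZIn d c q" and qn: "q \<le> n" and s: "\<sigma> \<in> SymAll" and sh: "act \<sigma> h \<in> ZIn d c n"
  shows "\<exists>\<tau>\<in>SymN n. act \<tau> h = act \<sigma> h"
proof -
  have b: "bij \<sigma>" using s SymAll_bij by blast
  have S1: "idxs h \<subseteq> {1..n}"
  proof
    fix e assume "e \<in> idxs h"
    then obtain xs j where "h (xs, j) \<noteq> 0" "e \<in> set xs" unfolding idxs_def by auto
    then show "e \<in> {1..n}" using h qn unfolding ZIn_def In_def supp_def by fastforce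
  qed
  have S2: "\<sigma> ` idxs h \<subseteq> {1..n}"
  proof
    fix e' assume "e' \<in> \<sigma> ` idxs h"
    then obtain e xs j where ex: "e' = \<sigma> e" "h (xs, j) \<noteq> 0" "e \<in> set xs" unfolding idxs_def by auto
    have "act \<sigma> h (map \<sigma> xs, j) = h (xs, j)"
      using b by (simp add: act_apply comp_def bij_is_inj)
    then have "(map \<sigma> xs, j) \<in> supp (act \<sigma> h)" using ex by (simp add: supp_def)
    then have "(map \<sigma> xs, j) \<in> In d c n" using sh unfolding ZIn_def by blast
    then have "set (map \<sigma> xs) \<subseteq> {1..n}" unfolding In_def by simp
    then show "e' \<in> {1..n}" using ex by auto
  qed
  obtain \<tau> where t: "\<tau> permutes {1..n}" "\<forall>x\<in>idxs h. \<tau> x = \<sigma> x"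
    using perm_extend[of "{1..n}" "idxs h" \<sigma>] S1 S2 b bij_is_inj inj_on_subset by blast
  have "act \<tau> h = act \<sigma> h" using act_agree[OF b permutes_bij[OF t(1)] t(2)] .
  then show ?thesis using t(1) unfolding SymN_def by blast
qed

lemma compress_perm:
  assumes u: "u \<in> ZIn d c n" and cs: "card (supp u) \<le> q'" and r: "d * q' \<le> r"
  shows "\<exists>\<tau>\<in>SymN (max n r). act \<tau> u \<in> ZIn d c r"
proof -
  have fs: "finite (supp u)" using u finite_In finite_subset unfolding ZIn_def by blast
  have S1: "idxs u \<subseteq> {1..n}"
  proof
    fix e assume "e \<in> idxs u"
    then obtain xs j where "u (xs, j) \<noteq> 0" "e \<in> set xs" unfolding idxs_def by auto
    then show "e \<in> {1..n}" using u unfolding ZIn_def In_def supp_def by fastforce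
  qed
  have Seq: "idxs u = (\<Union>p\<in>supp u. set (fst p))"
    unfolding idxs_def supp_def by force
  have "card (idxs u) \<le> (\<Sum>p\<in>supp u. card (set (fst p)))"
    unfolding Seq using fs card_UN_le by blast
  also have "\<dots> \<le> (\<Sum>p\<in>supp u. d)"
  proof (rule sum_mono)
    fix p assume "p \<in> supp u"
    then have "length (fst p) = d" using u unfolding ZIn_def In_def by auto
    then show "card (set (fst p)) \<le> d" using card_length by metis
  qed
  also have "\<dots> = card (supp u) * d" by simp
  also have "\<dots> \<le> r" using cs r by (metis dual_order.trans mult.commute mult_le_mono2)
  finally have cS: "card (idxs u) \<le> card {1..r}" by simp
  have fS: "finite (idxs u)" using S1 finite_subset by blast
  obtain f where f: "f ` idxs u \<subseteq> {1..r}" "inj_on f (idxs u)"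
    using card_le_inj[OF fS _ cS] by auto
  obtain \<tau> where t: "\<tau> permutes {1..max n r}" "\<forall>x\<in>idxs u. \<tau> x = f x"
    using perm_extend[of "{1..max n r}" "idxs u" f] S1 f by force
  have bt: "bij \<tau>" using permutes_bij t(1) by blast
  have "supp (act \<tau> u) \<subseteq> In d c r"
  proof
    fix p assume "p \<in> supp (act \<tau> u)"
    then obtain xs j where p: "p = (map \<tau> xs, j)" "(xs, j) \<in> supp u" using supp_act[OF bt] by auto
    have "length xs = d" "j \<in> {1..c}" using p u unfolding ZIn_def In_def by auto
    moreover have "set xs \<subseteq> idxs u" using p(2) unfolding idxs_def supp_def by auto
    then have "set (map \<tau> xs) \<subseteq> {1..r}" using t(2) f(1) by auto
    ultimately show "p \<in> In d c r" unfolding In_def p(1) by auto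
  qed
  then show ?thesis using t(1) unfolding SymN_def ZIn_def by blast
qed

locale ch =
  fixes d c :: nat and M :: "nat \<Rightarrow> vec set"
  assumes chain: "sym_inv_chain d c M" and nonneg: "\<forall>n\<ge>1. M n \<subseteq> ZIn_nonneg d c n"
begin

abbreviation "U \<equiv> chain_union M"

lemma Mn_monoid: "n \<ge> 1 \<Longrightarrow> is_monoid (M n)"
  using chain unfolding sym_inv_chain_def by auto

lemma Mn_mono: "1 \<le> m \<Longrightarrow> m \<le> n \<Longrightarrow> M m \<subseteq> M n"
  using chain unfolding sym_inv_chain_def by auto

lemma Mn_inv: "n \<ge> 1 \<Longrightarrow> \<sigma> \<in> SymN n \<Longrightarrow> u \<in> M n \<Longrightarrow> act \<sigma> u \<in> M n"
  using chain unfolding sym_inv_chain_def by auto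

lemma Mn_ZIn: "n \<ge> 1 \<Longrightarrow> M n \<subseteq> ZIn d c n"
  using chain unfolding sym_inv_chain_def by auto

lemma Mn_nonneg: "n \<ge> 1 \<Longrightarrow> u \<in> M n \<Longrightarrow> u x \<ge> 0"
  using nonneg unfolding ZIn_nonneg_def by blast

lemma Mn_good: "n \<ge> 1 \<Longrightarrow> good (M n)"
proof -
  assume n: "n \<ge> 1"
  have "finite (supp u) \<and> (\<forall>x. u x \<ge> 0)" if u: "u \<in> M n" for u
  proof -
    have "supp u \<subseteq> In d c n" using Mn_ZIn[OF n] u unfolding ZIn_def by blast
    then show ?thesis using finite_subset[OF _ finite_In] Mn_nonneg[OF n u] by blast
  qed
  then show ?thesis unfolding good_def using Mn_monoid[OF n] by blast
qed

lemma U_mem: "u \<in> U \<longleftrightarrow> (\<exists>n\<ge>1. u \<in> M n)"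
  unfolding chain_union_def by auto

lemma Mn_U: "n \<ge> 1 \<Longrightarrow> M n \<subseteq> U"
  using U_mem by blast

lemma U_big: "u \<in> U \<Longrightarrow> \<exists>n\<ge>n0. n \<ge> 1 \<and> u \<in> M n"
proof -
  assume "u \<in> U"
  then obtain m where m: "m \<ge> 1" "u \<in> M m" using U_mem by blast
  then have "u \<in> M (max m n0)" using Mn_mono[of m "max m n0"] by auto
  then show ?thesis using m by (intro exI[of _ "max m n0"]) auto
qed

lemma U_good: "good U"
proof -
  have "(\<lambda>_. 0) \<in> U" using Mn_monoid[of 1] Mn_U[of 1] unfolding is_monoid_def by auto
  moreover have "(\<lambda>x. u x + v x) \<in> U" if uv: "u \<in> U" "v \<in> U" for u v
  proof -
    obtain m where m: "m \<ge> 1" "u \<in> M m" using U_mem[of u] uv(1) by blast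
    obtain n where n: "n \<ge> m" "v \<in> M n" using U_big[of v m] uv(2) by blast
    have n1: "n \<ge> 1" using m n by simp
    have "u \<in> M n" using m n Mn_mono[of m n] by blast
    then have "(\<lambda>x. u x + v x) \<in> M n" using Mn_monoid[OF n1] n unfolding is_monoid_def by blast
    then show ?thesis using Mn_U[OF n1] by blast
  qed
  moreover have "finite (supp u) \<and> (\<forall>x. u x \<ge> 0)" if u: "u \<in> U" for u
  proof -
    obtain m where m: "m \<ge> 1" "u \<in> M m" using U_mem[of u] u by blast
    then show ?thesis using Mn_good[OF m(1)] unfolding good_def by blast
  qed
  ultimately show ?thesis unfolding good_def is_monoid_def by blast
qed

lemma U_inv: "\<sigma> \<in> SymAll \<Longrightarrow> u \<in> U \<Longrightarrow> act \<sigma> u \<in> U"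
proof -
  assume s: "\<sigma> \<in> SymAll" and u: "u \<in> U"
  obtain m where m: "m \<ge> 1" "\<sigma> \<in> SymN m" using s SymAll_iff by blast
  obtain n where n: "n \<ge> m" "n \<ge> 1" "u \<in> M n" using u U_big by blast
  have "\<sigma> \<in> SymN n" using SymN_mono n m by blast
  then show ?thesis using Mn_inv n Mn_U by blast
qed

lemma irr_act_n: "n \<ge> 1 \<Longrightarrow> \<sigma> \<in> SymN n \<Longrightarrow> u \<in> irr (M n) \<Longrightarrow> act \<sigma> u \<in> irr (M n)"
  using irr_act[of \<sigma> "M n" u] SymN_bij SymN_inv Mn_inv by blast

lemma irr_act_U: "\<sigma> \<in> SymAll \<Longrightarrow> u \<in> irr U \<Longrightarrow> act \<sigma> u \<in> irr U"
  using irr_act[of \<sigma> U u] SymAll_bij SymAll_inv U_inv by blast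

lemma irr_Mn_mono: "1 \<le> m \<Longrightarrow> m \<le> n \<Longrightarrow> u \<in> M m \<Longrightarrow> u \<in> irr (M n) \<Longrightarrow> u \<in> irr (M m)"
  using irr_sub Mn_mono by blast

end




lemma act_nncomb: "u \<in> nncomb A \<Longrightarrow> act \<sigma> u \<in> nncomb (act \<sigma> ` A)"
proof -
  assume u: "u \<in> nncomb A"
  have "is_monoid {u. act \<sigma> u \<in> nncomb (act \<sigma> ` A)}"
    unfolding is_monoid_def using act_zero act_add nncomb_zero nncomb_add by auto
  moreover have "A \<subseteq> {u. act \<sigma> u \<in> nncomb (act \<sigma> ` A)}" using nncomb_base by blast
  ultimately show ?thesis using nncomb_sub u by blast
qed

context ch begin

lemma ehbn_iff: "n \<ge> 1 \<Longrightarrow> equiv_hilbert_basis_n n H (M n) \<longleftrightarrow> H \<subseteq> M n \<and> orbit_set (SymN n) H = irr (M n)"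
  unfolding equiv_hilbert_basis_n_def using hb_iff[OF Mn_good] by blast

lemma ehb_iff: "equiv_hilbert_basis H U \<longleftrightarrow> H \<subseteq> U \<and> orbit_set SymAll H = irr U"
  unfolding equiv_hilbert_basis_def using hb_iff[OF U_good] by blast

lemma orb_sub: "n \<ge> 1 \<Longrightarrow> A \<subseteq> M n \<Longrightarrow> orbit_set (SymN n) A \<subseteq> M n"
  unfolding orbit_set_def using Mn_inv by blast

lemma ii_to_i:
  assumes "p \<ge> 1" "finite H" "\<forall>n\<ge>p. equiv_hilbert_basis_n n H (M n)"
  shows "(\<exists>p\<ge>1. \<forall>m n. p \<le> m \<and> m \<le> n \<longrightarrow> M n = nncomb (orbit_set (SymN n) (M m)))
      \<and> (\<exists>N. \<forall>n\<ge>N. finitely_generated (M n))"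
proof
  have hb: "H \<subseteq> M n" "hilbert_basis (orbit_set (SymN n) H) (M n)" if "n \<ge> p" for n
    using assms(3) that unfolding equiv_hilbert_basis_n_def by auto
  show "\<exists>p\<ge>1. \<forall>m n. p \<le> m \<and> m \<le> n \<longrightarrow> M n = nncomb (orbit_set (SymN n) (M m))"
  proof (intro exI[of _ p] conjI allI impI)
    fix m n assume mn: "p \<le> m \<and> m \<le> n"
    then have n1: "n \<ge> 1" "m \<ge> 1" using assms by auto
    have e1: "M n = nncomb (orbit_set (SymN n) H)" using hb[of n] mn unfolding hilbert_basis_def by auto
    have e2: "nncomb (orbit_set (SymN n) H) \<subseteq> nncomb (orbit_set (SymN n) (M m))"
      using hb[of m] mn by (intro nncomb_mono) (auto simp: orbit_set_def)
    have e3: "nncomb (orbit_set (SymN n) (M m)) \<subseteq> M n"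
      using nncomb_sub[OF Mn_monoid[OF n1(1)]] orb_sub[OF n1(1)] Mn_mono[OF n1(2)] mn by blast
    show "M n = nncomb (orbit_set (SymN n) (M m))" using e1 e2 e3 by blast
  qed (use assms in auto)
  show "\<exists>N. \<forall>n\<ge>N. finitely_generated (M n)"
  proof (intro exI[of _ p] allI impI)
    fix n assume "n \<ge> p"
    then have "orbit_set (SymN n) H \<subseteq> M n \<and> nncomb (orbit_set (SymN n) H) = M n"
      using hb[of n] unfolding hilbert_basis_def by simp
    then show "finitely_generated (M n)" unfolding finitely_generated_def
      using orbit_finite[OF SymN_finite[of n] assms(2)] by (intro exI[of _ "orbit_set (SymN n) H"]) simp
  qed
qed

lemma i_to_ii:
  assumes p: "p \<ge> 1" and stab: "\<forall>m n. p \<le> m \<and> m \<le> n \<longrightarrow> M n = nncomb (orbit_set (SymN n) (M m))"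
    and fg: "\<forall>n\<ge>N. finitely_generated (M n)"
  shows "\<exists>p\<ge>1. \<exists>H. finite H \<and> equiv_hilbert_basis_n p H (M p)
                 \<and> (\<forall>n\<ge>p. equiv_hilbert_basis_n n H (M n))"
proof -
  define m0 where "m0 = max p N"
  have m0: "m0 \<ge> 1" "m0 \<ge> p" "m0 \<ge> N" using p unfolding m0_def by auto
  obtain F where F: "finite F" "F \<subseteq> M m0" "nncomb F = M m0"
    using fg m0 unfolding finitely_generated_def by blast
  define H0 where "H0 = irr (M m0)"
  have H0F: "H0 \<subseteq> F" unfolding H0_def using irr_in_gen F by blast
  have fH0: "finite H0" using H0F F finite_subset by blast
  have H0M: "H0 \<subseteq> M m0" unfolding H0_def using irr_sub_M by blast
  have gen: "irr (M n) \<subseteq> orbit_set (SymN n) H0" if n: "n \<ge> m0" for n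
  proof -
    have n1: "n \<ge> 1" using n m0 by auto
    have sub: "orbit_set (SymN n) H0 \<subseteq> M n" using orb_sub[OF n1] H0M Mn_mono[OF m0(1) n] by blast
    have "nncomb (orbit_set (SymN n) H0) = M n"
    proof
      show "nncomb (orbit_set (SymN n) H0) \<subseteq> M n" using nncomb_sub[OF Mn_monoid[OF n1] sub] .
      have "orbit_set (SymN n) (M m0) \<subseteq> nncomb (orbit_set (SymN n) H0)"
      proof
        fix v assume "v \<in> orbit_set (SymN n) (M m0)"
        then obtain \<sigma> u where v: "v = act \<sigma> u" "\<sigma> \<in> SymN n" "u \<in> M m0" unfolding orbit_set_def by blast
        have "u \<in> nncomb H0" using v(3) nncomb_irr[OF Mn_good[OF m0(1)]] unfolding H0_def by blast
        then have "v \<in> nncomb (act \<sigma> ` H0)" using act_nncomb v(1) by blast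
        moreover have "act \<sigma> ` H0 \<subseteq> orbit_set (SymN n) H0" using v(2) unfolding orbit_set_def by blast
        ultimately show "v \<in> nncomb (orbit_set (SymN n) H0)" using nncomb_mono by blast
      qed
      then have "nncomb (orbit_set (SymN n) (M m0)) \<subseteq> nncomb (orbit_set (SymN n) H0)"
        using nncomb_mono nncomb_idem by metis
      then show "M n \<subseteq> nncomb (orbit_set (SymN n) H0)" using stab m0 n by metis
    qed
    then show ?thesis using irr_in_gen sub by blast
  qed
  define H' where "H' = {h \<in> H0. \<forall>n\<ge>m0. h \<in> irr (M n)}"
  define nh where "nh h = (SOME n. n \<ge> m0 \<and> h \<notin> irr (M n))" for h
  have nh: "nh h \<ge> m0 \<and> h \<notin> irr (M (nh h))" if "h \<in> H0 - H'" for h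
  proof -
    have "\<exists>n. n \<ge> m0 \<and> h \<notin> irr (M n)" using that unfolding H'_def by auto
    then show ?thesis unfolding nh_def by (rule someI_ex)
  qed
  define p' where "p' = Max (insert m0 (nh ` (H0 - H')))"
  have fin: "finite (insert m0 (nh ` (H0 - H')))" using fH0 by simp
  have p'm0: "p' \<ge> m0" unfolding p'_def using fin by simp
  have p'nh: "nh h \<le> p'" if "h \<in> H0 - H'" for h unfolding p'_def using fin that by simp
  have fH': "finite H'" using fH0 unfolding H'_def by simp
  have key: "H' \<subseteq> M n \<and> orbit_set (SymN n) H' = irr (M n)" if n: "n \<ge> p'" for n
  proof -
    have n1: "n \<ge> 1" "n \<ge> m0" using n p'm0 m0 by auto
    have "H' \<subseteq> M n" using H0M Mn_mono[OF m0(1) n1(2)] unfolding H'_def by blast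
    moreover have "orbit_set (SymN n) H' \<subseteq> irr (M n)"
      unfolding orbit_set_def H'_def using irr_act_n n1 by blast
    moreover have "irr (M n) \<subseteq> orbit_set (SymN n) H'"
    proof
      fix u assume u: "u \<in> irr (M n)"
      then obtain \<sigma> h where s: "u = act \<sigma> h" "\<sigma> \<in> SymN n" "h \<in> H0"
        using gen[OF n1(2)] unfolding orbit_set_def by blast
      have "h = act (inv \<sigma>) u" using s act_inv1 SymN_bij by metis
      then have hi: "h \<in> irr (M n)" using irr_act_n[OF n1(1) SymN_inv[OF s(2)] u] by simp
      have "h \<in> H'"
      proof (rule ccontr)
        assume "h \<notin> H'"
        then have hh: "h \<in> H0 - H'" using s by blast
        have "nh h \<le> n" using p'nh[OF hh] n by simp
        moreover have "h \<in> M (nh h)" using nh[OF hh] H0M s(3) Mn_mono[OF m0(1)] by blast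
        ultimately have "h \<in> irr (M (nh h))" using irr_Mn_mono[OF _ _ _ hi] nh[OF hh] m0 by auto
        then show False using nh[OF hh] by blast
      qed
      then show "u \<in> orbit_set (SymN n) H'" using s unfolding orbit_set_def by blast
    qed
    ultimately show ?thesis by blast
  qed
  show ?thesis
    using key ehbn_iff p'm0 m0 fH' by (intro exI[of _ p'] conjI exI[of _ H']) auto
qed

end



lemma supp_sum_sub:
  assumes "\<forall>x. v x \<ge> 0" "\<forall>x. w x \<ge> 0" "u = (\<lambda>x. v x + w x)"
  shows "supp v \<subseteq> supp u"
  using assms unfolding supp_def by (auto simp: add_nonneg_eq_0_iff)

context ch begin

lemma U_nonneg: "u \<in> U \<Longrightarrow> u x \<ge> 0"
  using U_good unfolding good_def by blast

lemma irr_restrict: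
  assumes n: "n \<ge> 1" and eq: "M n = U \<inter> ZIn d c n"
  shows "irr (M n) = irr U \<inter> ZIn d c n"
proof
  show "irr (M n) \<subseteq> irr U \<inter> ZIn d c n"
  proof
    fix u assume u: "u \<in> irr (M n)"
    have uM: "u \<in> M n" "u \<noteq> (\<lambda>_. 0)" using u unfolding irr_def by auto
    have uZ: "u \<in> ZIn d c n" using uM Mn_ZIn n by blast
    have "v = (\<lambda>_. 0) \<or> w = (\<lambda>_. 0)" if vw: "v \<in> U" "w \<in> U" "u = (\<lambda>x. v x + w x)" for v w
    proof -
      have "supp v \<subseteq> supp u" "supp w \<subseteq> supp u"
        using supp_sum_sub[of v w u] supp_sum_sub[of w v u] vw U_nonneg by (auto simp: add.commute)
      then have "v \<in> M n" "w \<in> M n" using vw uZ eq unfolding ZIn_def by auto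
      then show ?thesis using u vw(3) unfolding irr_def by blast
    qed
    then have "u \<in> irr U" using uM Mn_U[OF n] unfolding irr_def by blast
    then show "u \<in> irr U \<inter> ZIn d c n" using uZ by blast
  qed
  show "irr U \<inter> ZIn d c n \<subseteq> irr (M n)"
    using irr_sub[of "M n" U] Mn_U[OF n] eq irr_sub_M by blast
qed

lemma ii_to_iv:
  assumes "p \<ge> 1" "finite H" "\<forall>n\<ge>p. equiv_hilbert_basis_n n H (M n)"
  shows "\<exists>H. finite H \<and> equiv_hilbert_basis H U"
proof -
  have hb: "H \<subseteq> M n \<and> orbit_set (SymN n) H = irr (M n)" if "n \<ge> p" for n
    using assms(3) that ehbn_iff assms(1) by auto
  have "H \<subseteq> U" using hb[of p] Mn_U assms(1) by blast
  moreover have "orbit_set SymAll H \<subseteq> irr U"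
  proof
    fix v assume "v \<in> orbit_set SymAll H"
    then obtain \<sigma> h m where s: "v = act \<sigma> h" "\<sigma> \<in> SymN m" "m \<ge> 1" "h \<in> H"
      unfolding orbit_set_def SymAll_iff by blast
    have inorb: "v \<in> irr (M n)" if "n \<ge> max m p" for n
    proof -
      have "\<sigma> \<in> SymN n" using s SymN_mono that by auto
      then have "v \<in> orbit_set (SymN n) H" using s unfolding orbit_set_def by blast
      then show ?thesis using hb that by auto
    qed
    have mp1: "max m p \<ge> 1" using s(3) by simp
    have vi: "v \<in> irr (M (max m p))" using inorb[of "max m p"] by simp
    have v0: "v \<in> U" "v \<noteq> (\<lambda>_. 0)" using vi Mn_U[OF mp1] unfolding irr_def by auto
    have "v1 = (\<lambda>_. 0) \<or> w1 = (\<lambda>_. 0)" if vw: "v1 \<in> U" "w1 \<in> U" "v = (\<lambda>x. v1 x + w1 x)" for v1 w1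
    proof -
      obtain n1 where n1: "n1 \<ge> max m p" "n1 \<ge> 1" "v1 \<in> M n1" using U_big[of v1 "max m p"] vw by blast
      obtain n2 where n2: "n2 \<ge> n1" "n2 \<ge> 1" "w1 \<in> M n2" using U_big[of w1 n1] vw by blast
      have "v1 \<in> M n2" using Mn_mono n1 n2 by blast
      then show ?thesis using inorb[of n2] n1 n2 vw unfolding irr_def by auto
    qed
    then show "v \<in> irr U" using v0 unfolding irr_def by blast
  qed
  moreover have "irr U \<subseteq> orbit_set SymAll H"
  proof
    fix u assume u: "u \<in> irr U"
    then obtain n where n: "n \<ge> p" "n \<ge> 1" "u \<in> M n" using U_big[of u p] irr_sub_M by blast
    have "u \<in> irr (M n)" using irr_sub[OF Mn_U[OF n(2)] n(3) u] .
    then have "u \<in> orbit_set (SymN n) H" using hb n by auto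
    then show "u \<in> orbit_set SymAll H" using n unfolding orbit_set_def SymAll_iff by blast
  qed
  ultimately show ?thesis using assms(2) ehb_iff by blast
qed

lemma iv_key:
  assumes fH: "finite H" and HU: "H \<subseteq> U" and orb: "orbit_set SymAll H = irr U"
  shows "\<exists>q\<ge>1. H \<subseteq> M q \<and> (\<forall>n\<ge>q. M n = U \<inter> ZIn d c n \<and> irr (M n) = orbit_set (SymN n) H)"
proof -
  define a where "a h = (SOME n. n \<ge> 1 \<and> h \<in> M n)" for h
  have a: "a h \<ge> 1 \<and> h \<in> M (a h)" if "h \<in> H" for h
  proof -
    have "\<exists>n. n \<ge> 1 \<and> h \<in> M n" using U_mem[of h] that HU by blast
    then show ?thesis unfolding a_def by (rule someI_ex)
  qed
  define q where "q = Max (insert 1 (a ` H))"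
  have fin: "finite (insert 1 (a ` H))" using fH by simp
  have q1: "q \<ge> 1" unfolding q_def using fin by simp
  have HMq: "H \<subseteq> M q"
  proof
    fix h assume h: "h \<in> H"
    have "a h \<le> q" unfolding q_def using fin h by simp
    then show "h \<in> M q" using a[OF h] Mn_mono by blast
  qed
  have HZq: "H \<subseteq> ZIn d c q" using HMq Mn_ZIn q1 by blast
  have A: "M n = U \<inter> ZIn d c n" if n: "n \<ge> q" for n
  proof
    have n1: "n \<ge> 1" using n q1 by simp
    show "M n \<subseteq> U \<inter> ZIn d c n" using Mn_U Mn_ZIn n1 by blast
    show "U \<inter> ZIn d c n \<subseteq> M n"
    proof
      fix u assume u: "u \<in> U \<inter> ZIn d c n"
      then have "u \<in> U" by blast
      then have "u \<in> nncomb (irr U)" using nncomb_irr[OF U_good] by simp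
      then have "u \<in> nncomb (orbit_set SymAll H)" using orb by simp
      then obtain F k where uF: "u = (\<lambda>x. \<Sum>a\<in>F. int (k a) * a x)" and F: "finite F" "F \<subseteq> orbit_set SymAll H"
        by (rule nncombE)
      define F' where "F' = {a \<in> F. k a > 0}"
      have FU: "F \<subseteq> U" using F orb irr_sub_M by blast
      have uF': "u = (\<lambda>x. \<Sum>a\<in>F'. int (k a) * a x)"
        unfolding uF F'_def using F(1) by (intro ext sum.mono_neutral_right) auto
      have "F' \<subseteq> M n"
      proof
        fix b assume b: "b \<in> F'"
        have bsupp: "supp b \<subseteq> supp u"
        proof
          fix x assume "x \<in> supp b"
          then have bx: "b x > 0" using U_nonneg[of b x] FU b unfolding F'_def supp_def by force
          have "int (k b) * b x \<le> (\<Sum>a\<in>F. int (k a) * a x)"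
          proof -
            have Fnn: "\<forall>a\<in>F. \<forall>y. a y \<ge> 0" using FU U_nonneg by blast
            show ?thesis
            proof (rule member_le_sum)
              show "b \<in> F" using b unfolding F'_def by simp
              show "finite F" using F(1) .
              fix a assume "a \<in> F - {b}"
              then show "0 \<le> int (k a) * a x" using Fnn by (metis DiffD1 mult_nonneg_nonneg of_nat_0_le_iff)
            qed
          qed
          moreover have "int (k b) * b x > 0" using b bx unfolding F'_def by simp
          moreover have "u x = (\<Sum>a\<in>F. int (k a) * a x)" using uF by simp
          ultimately have "u x > 0" by linarith
          then show "x \<in> supp u" unfolding supp_def by simp
        qed
        then have bZ: "b \<in> ZIn d c n" using u unfolding ZIn_def by auto
        obtain \<sigma> h where s: "b = act \<sigma> h" "\<sigma> \<in> SymAll" "h \<in> H"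
          using b F unfolding F'_def orbit_set_def by blast
        obtain \<tau> where t: "\<tau> \<in> SymN n" "act \<tau> h = b"
          using ext_perm[of h d c q n \<sigma>] HZq s n bZ by auto
        have "h \<in> M n" using HMq s Mn_mono q1 n by blast
        then show "b \<in> M n" using Mn_inv[OF n1 t(1)] t(2) by blast
      qed
      moreover have "finite F'" using F(1) unfolding F'_def by simp
      ultimately have "u \<in> nncomb (M n)" using uF' nncombI[of F' "M n" k] by simp
      then show "u \<in> M n" using nncomb_sub[OF Mn_monoid[OF n1]] by blast
    qed
  qed
  have B: "irr (M n) = orbit_set (SymN n) H" if n: "n \<ge> q" for n
  proof
    have n1: "n \<ge> 1" using n q1 by simp
    have R: "irr (M n) = irr U \<inter> ZIn d c n" using irr_restrict[OF n1 A[OF n]] .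
    show "irr (M n) \<subseteq> orbit_set (SymN n) H"
    proof
      fix u assume "u \<in> irr (M n)"
      then have u: "u \<in> irr U" "u \<in> ZIn d c n" using R by auto
      then obtain \<sigma> h where s: "u = act \<sigma> h" "\<sigma> \<in> SymAll" "h \<in> H"
        using orb unfolding orbit_set_def by blast
      obtain \<tau> where t: "\<tau> \<in> SymN n" "act \<tau> h = u"
        using ext_perm[of h d c q n \<sigma>] HZq s n u by auto
      then show "u \<in> orbit_set (SymN n) H" using s unfolding orbit_set_def by blast
    qed
    show "orbit_set (SymN n) H \<subseteq> irr (M n)"
    proof
      fix v assume v: "v \<in> orbit_set (SymN n) H"
      have "v \<in> M n" using orb_sub[OF n1] HMq Mn_mono[OF q1 n] v by blast
      moreover have "v \<in> irr U" using v orb n1 unfolding orbit_set_def SymAll_iff by blast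
      ultimately show "v \<in> irr (M n)" using R Mn_ZIn n1 by blast
    qed
  qed
  show ?thesis using q1 HMq A B by blast
qed

lemma iv_to_ii:
  assumes "finite H" "equiv_hilbert_basis H U"
  shows "\<exists>p\<ge>1. \<exists>H. finite H \<and> equiv_hilbert_basis_n p H (M p)
                 \<and> (\<forall>n\<ge>p. equiv_hilbert_basis_n n H (M n))"
proof -
  obtain q where q: "q \<ge> 1" "H \<subseteq> M q" "\<forall>n\<ge>q. M n = U \<inter> ZIn d c n \<and> irr (M n) = orbit_set (SymN n) H"
    using iv_key assms ehb_iff by metis
  have "equiv_hilbert_basis_n n H (M n)" if "n \<ge> q" for n
  proof -
    have n1: "n \<ge> 1" using q that by simp
    have "H \<subseteq> M n" using q(1,2) Mn_mono[of q n] that by blast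
    moreover have "orbit_set (SymN n) H = irr (M n)" using q(3) that by blast
    ultimately show ?thesis using ehbn_iff[OF n1] by blast
  qed
  then show ?thesis using q assms by blast
qed

lemma iv_to_iii:
  assumes "finite H" "equiv_hilbert_basis H U"
  shows "\<exists>q\<ge>1. \<exists>q'\<ge>1. \<forall>n\<ge>q. M n = U \<inter> ZIn d c n
          \<and> (\<exists>H. finite H \<and> hilbert_basis H (M n) \<and> (\<forall>h\<in>H. card (supp h) \<le> q'))"
proof -
  obtain q where q: "q \<ge> 1" "H \<subseteq> M q" "\<forall>n\<ge>q. M n = U \<inter> ZIn d c n \<and> irr (M n) = orbit_set (SymN n) H"
    using iv_key assms ehb_iff by metis
  define q' where "q' = Max (insert 1 ((\<lambda>h. card (supp h)) ` H))"
  have fin: "finite (insert 1 ((\<lambda>h. card (supp h)) ` H))" using assms by simp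
  have q'1: "q' \<ge> 1" unfolding q'_def using fin by simp
  have q'h: "card (supp h) \<le> q'" if "h \<in> H" for h unfolding q'_def using fin that by simp
  have "M n = U \<inter> ZIn d c n
          \<and> (\<exists>H. finite H \<and> hilbert_basis H (M n) \<and> (\<forall>h\<in>H. card (supp h) \<le> q'))" if n: "n \<ge> q" for n
  proof -
    have n1: "n \<ge> 1" using n q by simp
    have irrn: "irr (M n) = orbit_set (SymN n) H" using q(3) n by blast
    have "finite (irr (M n))" using irrn orbit_finite[OF SymN_finite assms(1)] by simp
    moreover have "hilbert_basis (irr (M n)) (M n)" using hb_iff[OF Mn_good[OF n1]] by simp
    moreover have "\<forall>h\<in>irr (M n). card (supp h) \<le> q'"
    proof
      fix u assume "u \<in> irr (M n)"
      then have "u \<in> orbit_set (SymN n) H" using irrn by simp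
      then obtain \<sigma> h where "u = act \<sigma> h" "\<sigma> \<in> SymN n" "h \<in> H"
        unfolding orbit_set_def by blast
      then show "card (supp u) \<le> q'" using card_supp_act SymN_bij q'h by metis
    qed
    ultimately show ?thesis using q n by blast
  qed
  then show ?thesis using q q'1 by blast
qed

lemma iii_to_iv:
  assumes "q \<ge> 1" "q' \<ge> 1" and iii: "\<forall>n\<ge>q. M n = U \<inter> ZIn d c n
          \<and> (\<exists>H. finite H \<and> hilbert_basis H (M n) \<and> (\<forall>h\<in>H. card (supp h) \<le> q'))"
  shows "\<exists>H. finite H \<and> equiv_hilbert_basis H U"
proof -
  have P: "M n = U \<inter> ZIn d c n \<and> finite (irr (M n)) \<and> (\<forall>h\<in>irr (M n). card (supp h) \<le> q')" if n: "n \<ge> q" for n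
  proof -
    have n1: "n \<ge> 1" using n assms by simp
    then show ?thesis using iii n hb_iff[OF Mn_good[OF n1]] by metis
  qed
  define r where "r = max q (d * q')"
  have r: "r \<ge> q" "r \<ge> 1" "d * q' \<le> r" unfolding r_def using assms by auto
  define H where "H = irr (M r)"
  have Rr: "H = irr U \<inter> ZIn d c r" unfolding H_def using irr_restrict r P by blast
  have "finite H" unfolding H_def using P r by blast
  moreover have "H \<subseteq> U" using Rr irr_sub_M by blast
  moreover have "orbit_set SymAll H \<subseteq> irr U"
    unfolding orbit_set_def Rr using irr_act_U by blast
  moreover have "irr U \<subseteq> orbit_set SymAll H"
  proof
    fix u assume u: "u \<in> irr U"
    obtain n where n: "n \<ge> q" "n \<ge> 1" "u \<in> M n" using U_big[of u q] u irr_sub_M by blast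
    have uZ: "u \<in> ZIn d c n" using n Mn_ZIn by blast
    have "u \<in> irr (M n)" using irr_restrict[OF n(2)] P n u uZ by blast
    then have cs: "card (supp u) \<le> q'" using P n by blast
    obtain \<tau> where t: "\<tau> \<in> SymN (max n r)" "act \<tau> u \<in> ZIn d c r"
      using compress_perm[OF uZ cs r(3)] by blast
    have tA: "\<tau> \<in> SymAll" using t(1) r SymAll_iff by (metis le_max_iff_disj)
    have "act \<tau> u \<in> H" using Rr irr_act_U[OF tA u] t(2) by blast
    moreover have "u = act (inv \<tau>) (act \<tau> u)" using act_inv1 SymAll_bij tA by metis
    ultimately show "u \<in> orbit_set SymAll H" using SymAll_inv[OF tA] unfolding orbit_set_def by blast
  qed
  ultimately show ?thesis using ehb_iff by blast
qed

end


theorem theorem3p14: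
  fixes c d :: nat and M :: "nat \<Rightarrow> vec set"
  assumes "c \<ge> 1" and "d \<ge> 1"
    and chain: "sym_inv_chain d c M"
    and nonneg: "\<forall>n\<ge>1. M n \<subseteq> ZIn_nonneg d c n"
  defines "Mu \<equiv> chain_union M"
  defines "cond_i \<equiv>
      (\<exists>p\<ge>1. \<forall>m n. p \<le> m \<and> m \<le> n \<longrightarrow> M n = nncomb (orbit_set (SymN n) (M m)))
      \<and> (\<exists>N. \<forall>n\<ge>N. finitely_generated (M n))"
  defines "cond_ii \<equiv>
      (\<exists>p\<ge>1. \<exists>H. finite H \<and> equiv_hilbert_basis_n p H (M p)
                 \<and> (\<forall>n\<ge>p. equiv_hilbert_basis_n n H (M n)))"
  defines "cond_iii \<equiv>
      (\<exists>q\<ge>1. \<exists>q'\<ge>1. \<forall>n\<ge>q. M n = Mu \<inter> ZIn d c n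
          \<and> (\<exists>H. finite H \<and> hilbert_basis H (M n) \<and> (\<forall>h\<in>H. card (supp h) \<le> q')))"
  defines "cond_iv \<equiv> (\<exists>H. finite H \<and> equiv_hilbert_basis H Mu)"
  shows "(cond_i \<longleftrightarrow> cond_ii) \<and> (cond_ii \<longleftrightarrow> cond_iii) \<and> (cond_iii \<longleftrightarrow> cond_iv)"
  proof -
  interpret ch d c M using chain nonneg by unfold_locales
  have U: "Mu = chain_union M" by (simp add: Mu_def)
  have i_ii: "cond_ii" if "cond_i"
    using that i_to_ii unfolding cond_i_def cond_ii_def by blast
  have ii_i: "cond_i" if "cond_ii"
    using that ii_to_i unfolding cond_i_def cond_ii_def by blast
  have ii_iv: "cond_iv" if "cond_ii"
    using that ii_to_iv unfolding cond_iv_def cond_ii_def U by blast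
  have iv_ii: "cond_ii" if "cond_iv"
    using that iv_to_ii unfolding cond_iv_def cond_ii_def U by blast
  have iv_iii: "cond_iii" if "cond_iv"
    using that iv_to_iii unfolding cond_iv_def cond_iii_def U by blast
  have iii_iv: "cond_iv" if "cond_iii"
    using that iii_to_iv unfolding cond_iv_def cond_iii_def U by blast
  show ?thesis using i_ii ii_i ii_iv iv_ii iv_iii iii_iv by blast
qed



end
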